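(* Let $s,k,T\in\mathbb{N}$ and let $\mathcal{D}$ be any distribution on $\{0,1\}^T$. Then \[ \mathbf{S}^{s,k}[\mathcal{D}]\le \Pr_{w\sim\mathcal{D}}\bigl[\text{there is a decomposition } w=xyz \text{ with } |x|=s-1,\ |y|\ge k+1, \text{ such that } \mu_x(y)\ge 0\bigr]. \]
   Context: Characteristic strings and forks. A characteristic string is $w=w_1\dots w_n\in\{0,1\}^n$; index $i$ is honest if $w_i=0$ and adversarial if $w_i=1$. A fork for $w$ is a rooted tree with edges directed away from the root $r$ and labeling $\ell:V\to\{0,\dots,n\}$ with (F1) $\ell(r)=0$; (F2) labels strictly increasing along directed paths; (F3) each honest index labels exactly one vertex; (F4) for honest $i<j$ the vertex labeled $i$ has strictly smaller depth than the vertex labeled $j$. Write $F\vdash w$. A vertex is honest if it is the root or labeled by an honest index. A tine is a directed path from the root; its length is its number of edges, $\ell(t)$ the label of its last vertex. For $x$ a prefix of $w$, $F\vdash x$, $F'\vdash w$, $F\sqsubseteq F'$ means $F$ is a subgraph of $F'$ with identical labels. A fork is closed if every leaf is honest; a closed fork has a unique longest tine $\hat t$. Reach and relative margin. For closed $F\vdash w$ and tine $t$: $\mathrm{gap}(t)=\mathrm{length}(\hat t)-\mathrm{length}(t)$, $\mathrm{reserve}(t)=|\{i:w_i=1,\ i>\ell(t)\}|$, $\mathrm{reach}(t)=\mathrm{reserve}(t)-\mathrm{gap}(t)$. For $w=xy$, tines are disjoint over $y$ if they share no edge terminating at a vertex with label $>|x|$ (a tine may be paired with itself). $\mu_x(F)=\max\min\{\mathrm{reach}(t_1),\mathrm{reach}(t_2)\}$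 over pairs disjoint over $y$, and $\mu_x(y)=\max\{\mu_x(F):F\vdash xy\text{ closed}\}$. Settlement. For a fork $F\vdash w_1\dots w_t$ with $s+k\le t$, slot $s$ is not $k$-settled in $F$ if $F$ contains two tines of maximum length which either contain different vertices labeled $s$, or one contains a vertex labeled $s$ and the other does not. Settlement game. For a distribution $\mathcal{D}$ on $\{0,1\}^T$, the $(\mathcal{D},T;s,k)$-settlement game between an adversary $\mathcal{A}$ and a deterministic challenger: (1) $w\in\{0,1\}^T$ is drawn from $\mathcal{D}$ and given to $\mathcal{A}$; (2) $A_0$ is the single-vertex fork for the empty string; (3) for $t=1,\dots,T$: (a) if $w_t=0$, the challenger forms $F_t\vdash w_1\dots w_t$ by adding one vertex labeled $t$ to the end of a longest path of $A_{t-1}$ (ties broken by $\mathcal{A}$); (b) if $w_t=1$, $\mathcal{A}$ chooses an arbitrary fork $F_t\vdash w_1\dots w_t$ with $A_{t-1}\sqsubseteq F_t$; (c) $\mathcal{A}$ chooses an arbitrary fork $A_t\vdash w_1\dots w_t$ with $F_t\sqsubseteq A_t$. $\mathcal{A}$ wins if slot $s$ is not $k$-settled in some $A_t$ with $t\ge s+k$. $\mathbf{S}^{s,k}[\mathcal{D}]=\max_{\mathcal{A}}\Pr[\mathcal{A}\text{ wins}]$. *)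

theory Defs
  imports "HOL-Probability.Probability" "HOL-Library.Sublist"
begin

(* Characteristic strings: bool lists, True = 1 (adversarial), False = 0 (honest).
   Index i (1-based) of w is w ! (i - 1). *)

definition adv_idx :: "bool list \<Rightarrow> nat \<Rightarrow> bool" where
  "adv_idx w i \<longleftrightarrow> 1 \<le> i \<and> i \<le> length w \<and> w ! (i - 1)"

definition honest_idx :: "bool list \<Rightarrow> nat \<Rightarrow> bool" where
  "honest_idx w i \<longleftrightarrow> 1 \<le> i \<and> i \<le> length w \<and> \<not> w ! (i - 1)"

(* A fork: rooted tree whose vertices are addressed by paths of child indices
   (the root is []; the parent of v @ [c] is v), together with a labelling. *)
type_synonym fork = "nat list set \<times> (nat list \<Rightarrow> nat)"

definition verts :: "fork \<Rightarrow> nat list set" where "verts F = fst F"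
definition lab :: "fork \<Rightarrow> nat list \<Rightarrow> nat" where "lab F = snd F"

definition is_fork :: "bool list \<Rightarrow> fork \<Rightarrow> bool" where
  "is_fork w F \<longleftrightarrow>
     finite (verts F) \<and> [] \<in> verts F \<and>
     (\<forall>v\<in>verts F. \<forall>u. prefix u v \<longrightarrow> u \<in> verts F) \<and>
     (\<forall>v\<in>verts F. lab F v \<le> length w) \<and>
     lab F [] = 0 \<and>
     (\<forall>u\<in>verts F. \<forall>v\<in>verts F. strict_prefix u v \<longrightarrow> lab F u < lab F v) \<and>
     (\<forall>i. honest_idx w i \<longrightarrow> (\<exists>!v. v \<in> verts F \<and> lab F v = i)) \<and>
     (\<forall>u\<in>verts F. \<forall>v\<in>verts F. honest_idx w (lab F u) \<and> honest_idx w (lab F v)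
         \<and> lab F u < lab F v \<longrightarrow> length u < length v)"

definition subfork :: "fork \<Rightarrow> fork \<Rightarrow> bool" where
  "subfork F F' \<longleftrightarrow> verts F \<subseteq> verts F' \<and> (\<forall>v\<in>verts F. lab F v = lab F' v)"

definition is_leaf :: "fork \<Rightarrow> nat list \<Rightarrow> bool" where
  "is_leaf F v \<longleftrightarrow> v \<in> verts F \<and> \<not> (\<exists>u\<in>verts F. strict_prefix v u)"

definition honest_vertex :: "bool list \<Rightarrow> fork \<Rightarrow> nat list \<Rightarrow> bool" where
  "honest_vertex w F v \<longleftrightarrow> v = [] \<or> honest_idx w (lab F v)"

definition closed_fork :: "bool list \<Rightarrow> fork \<Rightarrow> bool" where
  "closed_fork w F \<longleftrightarrow> is_fork w F \<and> (\<forall>v. is_leaf F v \<longrightarrow> honest_vertex w F v)"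

(* Tines are identified with their terminal vertex v; the tine consists of the
   prefixes of v, its length is length v and its label is lab F v.
   height F = length of a longest tine. *)
definition height :: "fork \<Rightarrow> nat" where
  "height F = Max (length ` verts F)"

definition gap :: "fork \<Rightarrow> nat list \<Rightarrow> int" where
  "gap F t = int (height F) - int (length t)"

definition reserve :: "bool list \<Rightarrow> fork \<Rightarrow> nat list \<Rightarrow> nat" where
  "reserve w F t = card {i. adv_idx w i \<and> lab F t < i}"

definition reach :: "bool list \<Rightarrow> fork \<Rightarrow> nat list \<Rightarrow> int" where
  "reach w F t = int (reserve w F t) - gap F t"

(* tines t1, t2 share no edge terminating at a vertex with label > m (m = |x|) *)
definition disjoint_over :: "fork \<Rightarrow> nat \<Rightarrow> nat list \<Rightarrow> nat list \<Rightarrow> bool" where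
  "disjoint_over F m t1 t2 \<longleftrightarrow>
     (\<forall>u. u \<noteq> [] \<and> prefix u t1 \<and> prefix u t2 \<longrightarrow> lab F u \<le> m)"

definition mu_fork :: "bool list \<Rightarrow> bool list \<Rightarrow> fork \<Rightarrow> int" where
  "mu_fork x y F = Max {min (reach (x @ y) F t1) (reach (x @ y) F t2) | t1 t2.
      t1 \<in> verts F \<and> t2 \<in> verts F \<and> disjoint_over F (length x) t1 t2}"

(* mu_x(y) = max over closed forks (the max exists; Sup of ints coincides) *)
definition rel_margin :: "bool list \<Rightarrow> bool list \<Rightarrow> int" where
  "rel_margin x y = Sup {mu_fork x y F | F. closed_fork (x @ y) F}"

definition not_settled :: "nat \<Rightarrow> fork \<Rightarrow> bool" where
  "not_settled s F \<longleftrightarrow>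
     (\<exists>t1\<in>verts F. \<exists>t2\<in>verts F. length t1 = height F \<and> length t2 = height F \<and>
        ((\<exists>u1 u2. prefix u1 t1 \<and> prefix u2 t2 \<and> lab F u1 = s \<and> lab F u2 = s \<and> u1 \<noteq> u2) \<or>
         ((\<exists>u1. prefix u1 t1 \<and> lab F u1 = s) \<and> \<not> (\<exists>u2. prefix u2 t2 \<and> lab F u2 = s))))"

definition honest_extend :: "fork \<Rightarrow> nat list \<Rightarrow> nat \<Rightarrow> fork" where
  "honest_extend F u t =
     (let v = u @ [LEAST c. u @ [c] \<notin> verts F] in (insert v (verts F), (lab F)(v := t)))"

(* a play: the forks A_0..A_T and F_1..F_T *)
type_synonym play = "(nat \<Rightarrow> fork) \<times> (nat \<Rightarrow> fork)"

definition legal_play :: "nat \<Rightarrow> bool list \<Rightarrow> play \<Rightarrow> bool" where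
  "legal_play T w P \<longleftrightarrow>
     (let A = fst P; F = snd P in
       verts (A 0) = {[]} \<and> lab (A 0) [] = 0 \<and>
       (\<forall>t\<in>{1..T}.
          (if w ! (t - 1)
           then is_fork (take t w) (F t) \<and> subfork (A (t - 1)) (F t)
           else (\<exists>u\<in>verts (A (t - 1)). length u = height (A (t - 1)) \<and>
                   F t = honest_extend (A (t - 1)) u t)) \<and>
          is_fork (take t w) (A t) \<and> subfork (F t) (A t)))"

definition adv_wins :: "nat \<Rightarrow> nat \<Rightarrow> nat \<Rightarrow> play \<Rightarrow> bool" where
  "adv_wins T s k P \<longleftrightarrow> (\<exists>t. s + k \<le> t \<and> t \<le> T \<and> not_settled s (fst P t))"

(* S^{s,k}[D]: sup over adversaries. Since the adversary receives w up front and the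
   challenger is deterministic, an adversary is a map from w to a legal play. *)
definition settlement_value :: "bool list pmf \<Rightarrow> nat \<Rightarrow> nat \<Rightarrow> nat \<Rightarrow> real" where
  "settlement_value D T s k =
     (SUP adv \<in> {adv :: bool list \<Rightarrow> play. \<forall>w\<in>set_pmf D. legal_play T w (adv w)}.
        measure_pmf.prob D {w. adv_wins T s k (adv w)})"

end

theory Submission
  imports Defs
begin


lemma honest_idx_snoc:
  "honest_idx (w @ [b]) i \<longleftrightarrow> honest_idx w i \<or> (i = length w + 1 \<and> \<not> b)"
  by (auto simp: honest_idx_def nth_append)

lemma fork_adv_snoc:
  assumes "is_fork w A" shows "is_fork (w @ [True]) A"
proof -
  have h: "honest_idx (w @ [True]) i \<longleftrightarrow> honest_idx w i" for i
    unfolding honest_idx_snoc by simp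
  show ?thesis using assms unfolding is_fork_def h
    by (auto intro: le_SucI)
qed

lemma fork_finite: "is_fork w A \<Longrightarrow> finite (verts A)" by (simp add: is_fork_def)
lemma fork_root: "is_fork w A \<Longrightarrow> [] \<in> verts A" by (simp add: is_fork_def)
lemma fork_pref: "is_fork w A \<Longrightarrow> v \<in> verts A \<Longrightarrow> prefix u v \<Longrightarrow> u \<in> verts A"
  by (simp add: is_fork_def)
lemma fork_lab_le: "is_fork w A \<Longrightarrow> v \<in> verts A \<Longrightarrow> lab A v \<le> length w"
  by (simp add: is_fork_def)
lemma fork_lab0: "is_fork w A \<Longrightarrow> lab A [] = 0"
  by (simp add: is_fork_def)
lemma fork_mono: "is_fork w A \<Longrightarrow> u \<in> verts A \<Longrightarrow> v \<in> verts A \<Longrightarrow> strict_prefix u v \<Longrightarrow> lab A u < lab A v"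
  by (simp add: is_fork_def)

lemma fork_depth: "is_fork w A \<Longrightarrow> a \<in> verts A \<Longrightarrow> b \<in> verts A \<Longrightarrow> honest_idx w (lab A a) \<Longrightarrow>
   honest_idx w (lab A b) \<Longrightarrow> lab A a < lab A b \<Longrightarrow> length a < length b"
  unfolding is_fork_def by blast

lemma height_ge: "is_fork w A \<Longrightarrow> v \<in> verts A \<Longrightarrow> length v \<le> height A"
  unfolding height_def using fork_finite by auto

lemma height_ex: "is_fork w A \<Longrightarrow> \<exists>u\<in>verts A. length u = height A"
proof -
  assume a: "is_fork w A"
  have "height A \<in> length ` verts A" unfolding height_def
    using fork_finite[OF a] fork_root[OF a] by (intro Max_in) auto
  then show ?thesis by auto
qed

lemma fork_honest_extend:
  assumes F: "is_fork w A" and u: "u \<in> verts A" and hu: "length u = height A"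
  shows "is_fork (w @ [False]) (honest_extend A u (length w + 1))"
proof -
  define c where "c = (LEAST c. u @ [c] \<notin> verts A)"
  define v where "v = u @ [c]"
  have ex: "\<exists>c. u @ [c] \<notin> verts A"
  proof (rule ccontr)
    assume "\<not> ?thesis"
    then have "range (\<lambda>c. u @ [c]) \<subseteq> verts A" by auto
    moreover have "inj (\<lambda>c. u @ [c])" by (auto simp: inj_def)
    ultimately have "finite (range (\<lambda>c::nat. u @ [c]))"
      using fork_finite[OF F] finite_subset by blast
    with \<open>inj _\<close> show False using finite_imageD by blast
  qed
  have vn: "v \<notin> verts A" unfolding v_def c_def using LeastI_ex[OF ex] .
  have he: "honest_extend A u (length w + 1) = (insert v (verts A), (lab A)(v := length w + 1))"
    unfolding honest_extend_def v_def c_def Let_def by simp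
  let ?n = "length w + 1"
  let ?B = "honest_extend A u ?n"
  have vB: "verts ?B = insert v (verts A)" and lB: "lab ?B = (lab A)(v := ?n)"
    using he by (simp_all add: verts_def lab_def)
  have labV: "x \<in> verts A \<Longrightarrow> lab ?B x = lab A x" for x using vn lB by auto
  have labv: "lab ?B v = ?n" using lB by simp
  have old_le: "x \<in> verts A \<Longrightarrow> lab A x < ?n" for x using fork_lab_le[OF F] by fastforce
  have pv: "prefix p v \<Longrightarrow> p = v \<or> prefix p u" for p unfolding v_def by (simp add: prefix_snoc)
  have lenv: "length v = Suc (height A)" using hu v_def by simp
  show ?thesis unfolding is_fork_def
  proof (intro conjI)
    show "finite (verts ?B)" using vB fork_finite[OF F] by simp
    show "[] \<in> verts ?B" using vB fork_root[OF F] by simp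
    show "\<forall>x\<in>verts ?B. \<forall>p. prefix p x \<longrightarrow> p \<in> verts ?B"
    proof (intro ballI allI impI)
      fix x p assume x: "x \<in> verts ?B" and p: "prefix p x"
      show "p \<in> verts ?B"
      proof (cases "x = v")
        case True
        then have "p = v \<or> prefix p u" using pv p by simp
        then show ?thesis using vB fork_pref[OF F u] by auto
      next
        case False
        then have "x \<in> verts A" using x vB by simp
        then show ?thesis using vB fork_pref[OF F] p by auto
      qed
    qed
    show "\<forall>x\<in>verts ?B. lab ?B x \<le> length (w @ [False])"
    proof
      fix x assume x: "x \<in> verts ?B"
      show "lab ?B x \<le> length (w @ [False])"
      proof (cases "x = v")
        case True then show ?thesis using labv by simp
      next
        case False then have "x \<in> verts A" using x vB by simp
        then show ?thesis using labV old_le by (metis length_append_singleton less_Suc_eq_le Suc_eq_plus1 less_imp_le)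
      qed
    qed
    show "lab ?B [] = 0" using labV fork_root[OF F] fork_lab0[OF F] by simp
    show "\<forall>a\<in>verts ?B. \<forall>b\<in>verts ?B. strict_prefix a b \<longrightarrow> lab ?B a < lab ?B b"
    proof (intro ballI impI)
      fix a b assume a: "a \<in> verts ?B" and b: "b \<in> verts ?B" and ab: "strict_prefix a b"
      show "lab ?B a < lab ?B b"
      proof (cases "b = v")
        case True
        then have "prefix a u" using pv ab by (auto simp: strict_prefix_def)
        then have "a \<in> verts A" using fork_pref[OF F u] by simp
        then show ?thesis using True labV labv old_le by simp
      next
        case False
        then have bA: "b \<in> verts A" using b vB by simp
        have "a \<noteq> v" using fork_pref[OF F bA] ab vn by (auto simp: strict_prefix_def)
        then have "a \<in> verts A" using a vB by simp
        then show ?thesis using bA fork_mono[OF F] ab labV by simp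
      qed
    qed
    show "\<forall>i. honest_idx (w @ [False]) i \<longrightarrow> (\<exists>!x. x \<in> verts ?B \<and> lab ?B x = i)"
    proof (intro allI impI)
      fix i assume "honest_idx (w @ [False]) i"
      then consider "honest_idx w i" | "i = ?n" unfolding honest_idx_snoc by auto
      then show "\<exists>!x. x \<in> verts ?B \<and> lab ?B x = i"
      proof cases
        case 1
        then have il: "i \<le> length w" by (simp add: honest_idx_def)
        from 1 F obtain x0 where x0: "x0 \<in> verts A \<and> lab A x0 = i" and x0u: "\<And>y. y \<in> verts A \<and> lab A y = i \<Longrightarrow> y = x0"
          unfolding is_fork_def by metis
        show ?thesis
        proof (rule ex1I[of _ x0])
          show "x0 \<in> verts ?B \<and> lab ?B x0 = i" using x0 vB labV by simp
          fix y assume y: "y \<in> verts ?B \<and> lab ?B y = i"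
          have "y \<noteq> v" using y labv il by auto
          then have "y \<in> verts A" using y vB by simp
          then show "y = x0" using x0u y labV by simp
        qed
      next
        case 2
        show ?thesis
        proof (rule ex1I[of _ v])
          show "v \<in> verts ?B \<and> lab ?B v = i" using 2 vB labv by simp
          fix y assume y: "y \<in> verts ?B \<and> lab ?B y = i"
          show "y = v"
          proof (rule ccontr)
            assume "y \<noteq> v"
            then have "y \<in> verts A" using y vB by simp
            then show False using y labV old_le 2 by fastforce
          qed
        qed
      qed
    qed
    show "\<forall>a\<in>verts ?B. \<forall>b\<in>verts ?B. honest_idx (w @ [False]) (lab ?B a) \<and> honest_idx (w @ [False]) (lab ?B b)
         \<and> lab ?B a < lab ?B b \<longrightarrow> length a < length b"
    proof (intro ballI impI)
      fix a b assume a: "a \<in> verts ?B" and b: "b \<in> verts ?B"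
        and h: "honest_idx (w @ [False]) (lab ?B a) \<and> honest_idx (w @ [False]) (lab ?B b) \<and> lab ?B a < lab ?B b"
      show "length a < length b"
      proof (cases "b = v")
        case True
        then have "a \<noteq> v" using h by auto
        then have "a \<in> verts A" using a vB by simp
        then show ?thesis using True lenv height_ge[OF F] by fastforce
      next
        case False
        then have bA: "b \<in> verts A" using b vB by simp
        have "a \<noteq> v" using h labV[OF bA] labv old_le[OF bA] by auto
        then have aA: "a \<in> verts A" using a vB by simp
        have "honest_idx w (lab A a)" "honest_idx w (lab A b)"
          using h labV[OF aA] labV[OF bA] old_le[OF aA] old_le[OF bA] unfolding honest_idx_snoc by auto
        then show ?thesis using fork_depth[OF F aA bA] h labV[OF aA] labV[OF bA] by simp
      qed
    qed
  qed
qed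



fun hplay :: "bool list \<Rightarrow> nat \<Rightarrow> fork" where
  "hplay w 0 = ({[]}, \<lambda>_. 0)"
| "hplay w (Suc t) = (if w ! t then hplay w t else
     honest_extend (hplay w t) (SOME u. u \<in> verts (hplay w t) \<and> length u = height (hplay w t)) (Suc t))"

lemma fork_empty: "is_fork [] ({[]}, \<lambda>_. 0)"
  unfolding is_fork_def verts_def lab_def honest_idx_def by auto

lemma hplay_fork: "t \<le> length w \<Longrightarrow> is_fork (take t w) (hplay w t)"
proof (induction t)
  case 0 then show ?case using fork_empty by simp
next
  case (Suc t)
  then have IH: "is_fork (take t w) (hplay w t)" and tl: "t < length w" by auto
  have tk: "take (Suc t) w = take t w @ [w ! t]" using tl by (simp add: take_Suc_conv_app_nth)
  show ?case
  proof (cases "w ! t")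
    case True
    then show ?thesis using fork_adv_snoc[OF IH] tk by simp
  next
    case False
    let ?u = "SOME u. u \<in> verts (hplay w t) \<and> length u = height (hplay w t)"
    have "?u \<in> verts (hplay w t) \<and> length ?u = height (hplay w t)"
      using height_ex[OF IH] by (rule someI2_bex) auto
    then have "is_fork (take t w @ [False]) (honest_extend (hplay w t) ?u (length (take t w) + 1))"
      using fork_honest_extend[OF IH] by blast
    moreover have "length (take t w) + 1 = Suc t" using tl by simp
    ultimately show ?thesis using tk False by simp
  qed
qed

lemma hplay_legal: assumes T: "length w = T" shows "legal_play T w (hplay w, hplay w)"
proof -
  have step: "(if w ! (t - 1) then is_fork (take t w) (hplay w t) \<and> subfork (hplay w (t - 1)) (hplay w t)
    else \<exists>u\<in>verts (hplay w (t - 1)). length u = height (hplay w (t - 1)) \<and> hplay w t = honest_extend (hplay w (t - 1)) u t)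
    \<and> is_fork (take t w) (hplay w t) \<and> subfork (hplay w t) (hplay w t)" if t: "t \<in> {1..T}" for t
  proof -
    obtain t' where t': "t = Suc t'" and tl: "t' < length w" using t T by (cases t) auto
    have F: "is_fork (take t w) (hplay w t)" using hplay_fork t T by simp
    have "if w ! (t - 1) then is_fork (take t w) (hplay w t) \<and> subfork (hplay w (t - 1)) (hplay w t)
    else \<exists>u\<in>verts (hplay w (t - 1)). length u = height (hplay w (t - 1)) \<and> hplay w t = honest_extend (hplay w (t - 1)) u t"
    proof (cases "w ! t'")
      case True
      then show ?thesis using F t' by (simp add: subfork_def)
    next
      case False
      have IH: "is_fork (take t' w) (hplay w t')" using hplay_fork tl by simp
      let ?u = "SOME u. u \<in> verts (hplay w t') \<and> length u = height (hplay w t')"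
      have "?u \<in> verts (hplay w t') \<and> length ?u = height (hplay w t')"
        using height_ex[OF IH] by (rule someI2_bex) auto
      then show ?thesis using False t' by auto
    qed
    then show ?thesis using F by (simp add: subfork_def)
  qed
  have "verts (hplay w 0) = {[]}" "lab (hplay w 0) [] = 0" by (simp_all add: verts_def lab_def)
  then show ?thesis unfolding legal_play_def Let_def fst_conv snd_conv using step by blast
qed

definition clo :: "bool list \<Rightarrow> fork \<Rightarrow> fork" where
  "clo w A = ({v\<in>verts A. \<exists>h\<in>verts A. honest_vertex w A h \<and> prefix v h}, lab A)"

lemma clo_verts: "verts (clo w A) = {v\<in>verts A. \<exists>h\<in>verts A. honest_vertex w A h \<and> prefix v h}"
  by (simp add: clo_def verts_def)
lemma clo_lab: "lab (clo w A) = lab A"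
  by (simp add: clo_def lab_def)

lemma clo_closed:
  assumes F: "is_fork w A" shows "closed_fork w (clo w A)"
proof -
  let ?C = "clo w A"
  have sub: "verts ?C \<subseteq> verts A" using clo_verts by auto
  have hv: "h \<in> verts A \<Longrightarrow> honest_vertex w A h \<Longrightarrow> h \<in> verts ?C" for h
    using clo_verts by auto
  have fk: "is_fork w ?C" unfolding is_fork_def clo_lab
  proof (intro conjI)
    show "finite (verts ?C)" using sub fork_finite[OF F] finite_subset by blast
    show "[] \<in> verts ?C" using hv fork_root[OF F] by (simp add: honest_vertex_def)
    show "\<forall>v\<in>verts ?C. \<forall>u. prefix u v \<longrightarrow> u \<in> verts ?C"
      unfolding clo_verts using fork_pref[OF F] prefix_order.trans by blast
    show "\<forall>v\<in>verts ?C. lab A v \<le> length w" using sub fork_lab_le[OF F] by blast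
    show "lab A [] = 0" using fork_lab0[OF F] .
    show "\<forall>u\<in>verts ?C. \<forall>v\<in>verts ?C. strict_prefix u v \<longrightarrow> lab A u < lab A v"
      using sub fork_mono[OF F] by blast
    show "\<forall>i. honest_idx w i \<longrightarrow> (\<exists>!v. v \<in> verts ?C \<and> lab A v = i)"
    proof (intro allI impI)
      fix i assume i: "honest_idx w i"
      from i F obtain x0 where x0: "x0 \<in> verts A \<and> lab A x0 = i" and x0u: "\<And>y. y \<in> verts A \<and> lab A y = i \<Longrightarrow> y = x0"
        unfolding is_fork_def by metis
      have "x0 \<in> verts ?C" using hv x0 i by (simp add: honest_vertex_def)
      then show "\<exists>!v. v \<in> verts ?C \<and> lab A v = i" using x0 x0u sub by blast
    qed
    show "\<forall>u\<in>verts ?C. \<forall>v\<in>verts ?C. honest_idx w (lab A u) \<and> honest_idx w (lab A v)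
         \<and> lab A u < lab A v \<longrightarrow> length u < length v"
      using sub fork_depth[OF F] by blast
  qed
  show ?thesis unfolding closed_fork_def
  proof (intro conjI allI impI fk)
    fix v assume "is_leaf ?C v"
    then have v: "v \<in> verts ?C" and nl: "\<not> (\<exists>u\<in>verts ?C. strict_prefix v u)" by (auto simp: is_leaf_def)
    then obtain h where h: "h \<in> verts A" "honest_vertex w A h" "prefix v h" using clo_verts by auto
    have "h \<in> verts ?C" using hv h by simp
    then have "v = h" using nl h(3) by (auto simp: strict_prefix_def)
    then show "honest_vertex w ?C v" using h by (simp add: honest_vertex_def clo_lab)
  qed
qed



lemma height_mono:
  assumes F: "is_fork w A" and G: "is_fork w' C" and sub: "verts C \<subseteq> verts A"
  shows "height C \<le> height A"
  unfolding height_def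
  using fork_finite[OF F] fork_root[OF G] sub by (intro Max_mono) auto

lemma take_pref_mono: assumes "i < j" "j \<le> length t" shows "strict_prefix (take i t) (take j t)"
proof -
  have "take i t = take i (take j t)" using assms by (simp add: min_def)
  then have "prefix (take i t) (take j t)" by (metis take_is_prefix)
  moreover have "length (take i t) \<noteq> length (take j t)" using assms by simp
  ultimately show ?thesis by (metis strict_prefix_def)
qed

lemma trim:
  assumes F: "is_fork w A" and t1: "t1 \<in> verts A" and h1: "length t1 = height A"
  shows "\<exists>t'. prefix t' t1 \<and> t' \<in> verts (clo w A) \<and> 0 \<le> reach w (clo w A) t'"
proof -
  let ?C = "clo w A"
  have CF: "is_fork w ?C" using clo_closed[OF F] by (simp add: closed_fork_def)
  have sub: "verts ?C \<subseteq> verts A" using clo_verts by auto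
  have hv: "h \<in> verts A \<Longrightarrow> honest_vertex w A h \<Longrightarrow> h \<in> verts ?C" for h
    using clo_verts by auto
  define J where "J = {j. j \<le> length t1 \<and> take j t1 \<in> verts ?C}"
  have finJ: "finite J" unfolding J_def by simp
  have "0 \<in> J" unfolding J_def using fork_root[OF CF] by simp
  define j0 where "j0 = Max J"
  have j0J: "j0 \<in> J" unfolding j0_def using finJ \<open>0 \<in> J\<close> by (intro Max_in) auto
  have j0max: "j \<in> J \<Longrightarrow> j \<le> j0" for j unfolding j0_def using finJ by simp
  define t' where "t' = take j0 t1"
  have t'C: "t' \<in> verts ?C" and j0l: "j0 \<le> length t1" using j0J unfolding J_def t'_def by auto
  have t'A: "t' \<in> verts A" using t'C sub by auto
  have lt': "length t' = j0" using j0l t'_def by simp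
  define R where "R = {i. adv_idx w i \<and> lab ?C t' < i}"
  have finR: "finite R" unfolding R_def adv_idx_def
    by (rule finite_subset[of _ "{..length w}"]) auto
  let ?f = "\<lambda>j. lab A (take j t1)"
  have mapsto: "?f j \<in> R" if j: "j0 < j" "j \<le> length t1" for j
  proof -
    have pA: "take j t1 \<in> verts A" using fork_pref[OF F t1] take_is_prefix by blast
    have nC: "take j t1 \<notin> verts ?C" using j j0max unfolding J_def by fastforce
    have nh: "\<not> honest_vertex w A (take j t1)" using hv pA nC by blast
    have sp: "strict_prefix t' (take j t1)" unfolding t'_def using take_pref_mono[OF j] .
    have gt: "lab A t' < ?f j" using fork_mono[OF F t'A pA sp] .
    have le: "?f j \<le> length w" using fork_lab_le[OF F pA] .
    show ?thesis using nh gt le unfolding R_def adv_idx_def honest_vertex_def honest_idx_def clo_lab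
      by auto
  qed
  have inj: "inj_on ?f {j0<..length t1}"
  proof (rule linorder_inj_onI)
    fix i j assume ij: "i < j" and i: "i \<in> {j0<..length t1}" and j: "j \<in> {j0<..length t1}"
    have pA: "take j t1 \<in> verts A" using fork_pref[OF F t1] take_is_prefix by blast
    have pA': "take i t1 \<in> verts A" using fork_pref[OF F t1] take_is_prefix by blast
    have "strict_prefix (take i t1) (take j t1)" using take_pref_mono[OF ij] j by auto
    then show "?f i \<noteq> ?f j" using fork_mono[OF F pA' pA] by simp
  qed auto
  have "card {j0<..length t1} \<le> card R"
  proof (rule card_inj_on_le[OF inj _ finR])
    show "?f ` {j0<..length t1} \<subseteq> R" using mapsto by auto
  qed
  then have res: "length t1 - j0 \<le> reserve w ?C t'" unfolding reserve_def R_def by simp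
  have "height ?C \<le> height A" using height_mono[OF F CF sub] .
  then have "gap ?C t' \<le> int (length t1 - j0)" unfolding gap_def using lt' h1 j0l by simp
  then have "0 \<le> reach w ?C t'" unfolding reach_def using res by linarith
  moreover have "prefix t' t1" unfolding t'_def by (rule take_is_prefix)
  ultimately show ?thesis using t'C by blast
qed



lemma pref_lab_eq:
  assumes F: "is_fork w A" and t: "t \<in> verts A" and a: "prefix a t" and b: "prefix b t"
    and l: "lab A a = lab A b" shows "a = b"
proof -
  have aA: "a \<in> verts A" and bA: "b \<in> verts A" using fork_pref[OF F t] a b by auto
  from a b have "prefix a b \<or> prefix b a" using prefix_same_cases by blast
  then show ?thesis using fork_mono[OF F aA bA] fork_mono[OF F bA aA] l
    by (metis less_irrefl prefix_order.le_less)
qed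

lemma pref_lab_le:
  assumes F: "is_fork w A" and t: "t \<in> verts A" and a: "prefix a t" and b: "prefix b t"
    and l: "lab A a \<le> lab A b" shows "prefix a b"
proof -
  have aA: "a \<in> verts A" and bA: "b \<in> verts A" using fork_pref[OF F t] a b by auto
  from a b have "prefix a b \<or> prefix b a" using prefix_same_cases by blast
  then show ?thesis using fork_mono[OF F bA aA] l
    by (metis leD prefix_order.le_less)
qed

lemma disj:
  assumes F: "is_fork w A" and s: "1 \<le> s" and t1: "t1 \<in> verts A" and t2: "t2 \<in> verts A"
    and c: "(\<exists>u1 u2. prefix u1 t1 \<and> prefix u2 t2 \<and> lab A u1 = s \<and> lab A u2 = s \<and> u1 \<noteq> u2) \<or>
         ((\<exists>u1. prefix u1 t1 \<and> lab A u1 = s) \<and> \<not> (\<exists>u2. prefix u2 t2 \<and> lab A u2 = s))"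
  shows "disjoint_over A (s - 1) t1 t2"
  unfolding disjoint_over_def
proof (intro allI impI)
  fix u assume u: "u \<noteq> [] \<and> prefix u t1 \<and> prefix u t2"
  show "lab A u \<le> s - 1"
  proof (rule ccontr)
    assume "\<not> ?thesis"
    then have ge: "s \<le> lab A u" using s by simp
    from c show False
    proof
      assume "\<exists>u1 u2. prefix u1 t1 \<and> prefix u2 t2 \<and> lab A u1 = s \<and> lab A u2 = s \<and> u1 \<noteq> u2"
      then obtain u1 u2 where h: "prefix u1 t1" "prefix u2 t2" "lab A u1 = s" "lab A u2 = s" "u1 \<noteq> u2" by blast
      have "prefix u1 u" using pref_lab_le[OF F t1 h(1)] u h(3) ge by simp
      have "prefix u2 u" using pref_lab_le[OF F t2 h(2)] u h(4) ge by simp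
      have "u1 = u2" using pref_lab_eq[OF F t1 h(1)] \<open>prefix u2 u\<close> u h(3,4)
        by (metis prefix_order.trans)
      then show False using h(5) by simp
    next
      assume "(\<exists>u1. prefix u1 t1 \<and> lab A u1 = s) \<and> \<not> (\<exists>u2. prefix u2 t2 \<and> lab A u2 = s)"
      then obtain u1 where h: "prefix u1 t1" "lab A u1 = s" and n: "\<not> (\<exists>u2. prefix u2 t2 \<and> lab A u2 = s)" by blast
      have "prefix u1 u" using pref_lab_le[OF F t1 h(1)] u h(2) ge by simp
      then show False using n u h(2) by (metis prefix_order.trans)
    qed
  qed
qed

lemma pairs_fin:
  assumes "finite V"
  shows "finite {min (f t1) (f t2) | t1 t2. t1 \<in> V \<and> t2 \<in> V \<and> P t1 t2}" (is "finite ?S")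
proof -
  have "?S \<subseteq> (\<lambda>(a, b). min (f a) (f b)) ` (V \<times> V)" by auto
  then show ?thesis using assms finite_subset by blast
qed

lemma mu_bound:
  assumes C: "closed_fork (x @ y) F" shows "mu_fork x y F \<le> int (length (x @ y))"
proof -
  let ?w = "x @ y"
  have F: "is_fork ?w F" using C by (simp add: closed_fork_def)
  let ?S = "{min (reach ?w F t1) (reach ?w F t2) | t1 t2.
      t1 \<in> verts F \<and> t2 \<in> verts F \<and> disjoint_over F (length x) t1 t2}"
  have fin: "finite ?S" using pairs_fin fork_finite[OF F] by blast
  have "min (reach ?w F []) (reach ?w F []) \<in> ?S"
  proof -
    have "disjoint_over F (length x) [] []" by (simp add: disjoint_over_def)
    then show ?thesis using fork_root[OF F] by blast
  qed
  then have ne: "?S \<noteq> {}" by blast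
  have rb: "reach ?w F t \<le> int (length ?w)" if t: "t \<in> verts F" for t
  proof -
    have "reserve ?w F t \<le> card {1..length ?w}" unfolding reserve_def adv_idx_def
      by (rule card_mono) auto
    moreover have "0 \<le> gap F t" unfolding gap_def using height_ge[OF F t] by simp
    ultimately show ?thesis unfolding reach_def by simp
  qed
  have "\<forall>m\<in>?S. m \<le> int (length ?w)" using rb by force
  then show ?thesis unfolding mu_fork_def using fin ne by simp
qed

lemma margin:
  assumes F: "is_fork (x @ y) A" and ns: "not_settled (length x + 1) A"
  shows "0 \<le> rel_margin x y"
proof -
  let ?w = "x @ y" and ?s = "length x + 1"
  let ?C = "clo ?w A"
  have CC: "closed_fork ?w ?C" using clo_closed[OF F] .
  obtain t1 t2 where t1: "t1 \<in> verts A" and t2: "t2 \<in> verts A" and h1: "length t1 = height A"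
    and h2: "length t2 = height A"
    and c: "(\<exists>u1 u2. prefix u1 t1 \<and> prefix u2 t2 \<and> lab A u1 = ?s \<and> lab A u2 = ?s \<and> u1 \<noteq> u2) \<or>
         ((\<exists>u1. prefix u1 t1 \<and> lab A u1 = ?s) \<and> \<not> (\<exists>u2. prefix u2 t2 \<and> lab A u2 = ?s))"
    using ns unfolding not_settled_def by blast
  have d: "disjoint_over A (length x) t1 t2" using disj[OF F _ t1 t2 c] by simp
  obtain t1' where p1: "prefix t1' t1" and c1: "t1' \<in> verts ?C" and r1: "0 \<le> reach ?w ?C t1'"
    using trim[OF F t1 h1] by blast
  obtain t2' where p2: "prefix t2' t2" and c2: "t2' \<in> verts ?C" and r2: "0 \<le> reach ?w ?C t2'"
    using trim[OF F t2 h2] by blast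
  have d': "disjoint_over ?C (length x) t1' t2'"
    using d p1 p2 unfolding disjoint_over_def clo_lab by (meson prefix_order.trans)
  let ?S = "{min (reach ?w ?C t1) (reach ?w ?C t2) | t1 t2.
      t1 \<in> verts ?C \<and> t2 \<in> verts ?C \<and> disjoint_over ?C (length x) t1 t2}"
  have CF: "is_fork ?w ?C" using CC by (simp add: closed_fork_def)
  have fin: "finite ?S" using pairs_fin fork_finite[OF CF] by blast
  have "min (reach ?w ?C t1') (reach ?w ?C t2') \<in> ?S" using c1 c2 d' by blast
  then have "min (reach ?w ?C t1') (reach ?w ?C t2') \<le> mu_fork x y ?C"
    unfolding mu_fork_def using fin by (rule Max_ge[rotated])
  then have m0: "0 \<le> mu_fork x y ?C" using r1 r2 by linarith
  have bdd: "bdd_above {mu_fork x y F | F. closed_fork ?w F}"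
    using mu_bound by (auto intro!: bdd_aboveI[of _ "int (length ?w)"])
  have "mu_fork x y ?C \<le> rel_margin x y" unfolding rel_margin_def
  proof (rule cSup_upper[OF _ bdd])
    show "mu_fork x y ?C \<in> {mu_fork x y F | F. closed_fork ?w F}" using CC by blast
  qed
  then show ?thesis using m0 by linarith
qed



lemma ns0:
  assumes r: "lab A [] = 0" and pc: "\<And>u v. v \<in> verts A \<Longrightarrow> prefix u v \<Longrightarrow> u \<in> verts A"
    and pos: "\<And>v. v \<in> verts A \<Longrightarrow> v \<noteq> [] \<Longrightarrow> 0 < lab A v"
  shows "\<not> not_settled 0 A"
proof
  assume "not_settled 0 A"
  then obtain t1 t2 where t1: "t1 \<in> verts A" and t2: "t2 \<in> verts A" and
    c: "(\<exists>u1 u2. prefix u1 t1 \<and> prefix u2 t2 \<and> lab A u1 = 0 \<and> lab A u2 = 0 \<and> u1 \<noteq> u2) \<or>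
         ((\<exists>u1. prefix u1 t1 \<and> lab A u1 = 0) \<and> \<not> (\<exists>u2. prefix u2 t2 \<and> lab A u2 = 0))"
    unfolding not_settled_def by blast
  have z: "prefix u t \<Longrightarrow> t \<in> verts A \<Longrightarrow> lab A u = 0 \<Longrightarrow> u = []" for u t
    using pc pos by fastforce
  from c show False
  proof
    assume "\<exists>u1 u2. prefix u1 t1 \<and> prefix u2 t2 \<and> lab A u1 = 0 \<and> lab A u2 = 0 \<and> u1 \<noteq> u2"
    then obtain u1 u2 where "prefix u1 t1" "prefix u2 t2" "lab A u1 = 0" "lab A u2 = 0" "u1 \<noteq> u2" by blast
    then show False using z[of u1 t1] z[of u2 t2] t1 t2 by simp
  next
    assume "(\<exists>u1. prefix u1 t1 \<and> lab A u1 = 0) \<and> \<not> (\<exists>u2. prefix u2 t2 \<and> lab A u2 = 0)"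
    then have "\<not> (prefix [] t2 \<and> lab A [] = 0)" by blast
    then show False using r by simp
  qed
qed

lemma win_in:
  assumes len: "length w = T" and lp: "legal_play T w P" and aw: "adv_wins T s k P"
  shows "\<exists>x y z. w = x @ y @ z \<and> length x = s - 1 \<and> k + 1 \<le> length y \<and> 0 \<le> rel_margin x y"
proof -
  obtain t where st: "s + k \<le> t" and tT: "t \<le> T" and ns: "not_settled s (fst P t)"
    using aw unfolding adv_wins_def by blast
  let ?A = "fst P"
  have A0: "verts (?A 0) = {[]}" "lab (?A 0) [] = 0" using lp unfolding legal_play_def Let_def by auto
  have At: "is_fork (take t w) (?A t)" if "1 \<le> t" using lp that tT unfolding legal_play_def Let_def by auto
  show ?thesis
  proof (cases "s = 0")
    case True
    have "\<not> not_settled 0 (?A t)"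
    proof (cases "t = 0")
      case True
      then show ?thesis using A0 by (intro ns0) auto
    next
      case False
      then have F: "is_fork (take t w) (?A t)" using At by simp
      show ?thesis
      proof (rule ns0)
        show "lab (?A t) [] = 0" using fork_lab0[OF F] .
        show "u \<in> verts (?A t)" if "v \<in> verts (?A t)" "prefix u v" for u v using fork_pref[OF F] that .
        show "0 < lab (?A t) v" if v: "v \<in> verts (?A t)" "v \<noteq> []" for v
          using fork_mono[OF F fork_root[OF F] v(1)] v(2) fork_lab0[OF F]
          by (simp add: strict_prefix_def)
      qed
    qed
    then show ?thesis using ns True by simp
  next
    case False
    then have F: "is_fork (take t w) (?A t)" using At st by simp
    define x where "x = take (s - 1) w"
    define y where "y = take (t - (s - 1)) (drop (s - 1) w)"
    define z where "z = drop t w"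
    have e: "s - 1 + (t - (s - 1)) = t" using st by simp
    have xy: "x @ y = take t w" unfolding x_def y_def take_add[symmetric] e ..
    have w: "w = x @ y @ z" using xy unfolding z_def by (metis append.assoc append_take_drop_id)
    have lx: "length x = s - 1" unfolding x_def using st tT len by simp
    have ly: "k + 1 \<le> length y" unfolding y_def using st tT len False by simp
    have "not_settled (length x + 1) (?A t)" using lx False ns by simp
    moreover have "is_fork (x @ y) (?A t)" using F xy by simp
    ultimately have "0 \<le> rel_margin x y" using margin by blast
    then show ?thesis using w lx ly by blast
  qed
qed

theorem lemma5:
  fixes s k T :: nat and D :: "bool list pmf"
  assumes "set_pmf D \<subseteq> {w. length w = T}"
  shows "settlement_value D T s k \<le>
    measure_pmf.prob D {w. \<exists>x y z. w = x @ y @ z \<and> length x = s - 1 \<and>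
                              k + 1 \<le> length y \<and> 0 \<le> rel_margin x y}"
proof -
  let ?R = "{w. \<exists>x y z. w = x @ y @ z \<and> length x = s - 1 \<and> k + 1 \<le> length y \<and> 0 \<le> rel_margin x y}"
  let ?Adv = "{adv :: bool list \<Rightarrow> play. \<forall>w\<in>set_pmf D. legal_play T w (adv w)}"
  have ne: "?Adv \<noteq> {}"
  proof -
    have "(\<lambda>w. (hplay w, hplay w)) \<in> ?Adv" using assms hplay_legal by auto
    then show ?thesis by (metis empty_iff)
  qed
  show ?thesis unfolding settlement_value_def
  proof (rule cSUP_least[OF ne])
    fix adv assume adv: "adv \<in> ?Adv"
    have "measure_pmf.prob D {w. adv_wins T s k (adv w)}
        = measure_pmf.prob D ({w. adv_wins T s k (adv w)} \<inter> set_pmf D)"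
      by (simp add: measure_Int_set_pmf)
    also have "\<dots> \<le> measure_pmf.prob D ?R"
    proof (rule measure_pmf.finite_measure_mono)
      show "{w. adv_wins T s k (adv w)} \<inter> set_pmf D \<subseteq> ?R"
      proof
        fix w assume w: "w \<in> {w. adv_wins T s k (adv w)} \<inter> set_pmf D"
        have "length w = T" using w assms by auto
        moreover have "legal_play T w (adv w)" using w adv by auto
        ultimately show "w \<in> ?R" using win_in w by blast
      qed
    qed simp
    finally show "measure_pmf.prob D {w. adv_wins T s k (adv w)} \<le> measure_pmf.prob D ?R" .
  qed
qed


end
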